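(* Let $A$ and $B$ be rings, $f: A\to B$ a ring homomorphism and $J$ a proper ideal of $B$ such that $f^{-1}(J)\subseteq \mathrm{nil}(A)$. Then $A\bowtie^{f}J$ is a nil-Armendariz ring if and only if $f(A)+J$ is a nil-Armendariz ring.
   Context: All rings are associative with identity (not necessarily commutative), ring homomorphisms are unital, and ideals are two-sided. $\mathrm{nil}(R)$ denotes the set of nilpotent elements of a ring $R$, and $\mathrm{nil}(R)[x]$ the set of polynomials all of whose coefficients lie in $\mathrm{nil}(R)$. For a ring homomorphism $f:A\to B$ and an ideal $J$ of $B$, the amalgamation is the subring $A\bowtie^{f}J=\{(a,f(a)+j)\mid a\in A,\ j\in J\}$ of $A\times B$; $f(A)+J=\{f(a)+j: a\in A, j\in J\}$ is a subring of $B$. A ring $R$ is nil-Armendariz if whenever $p(x)=\sum_{i=0}^n a_ix^i$ and $q(x)=\sum_{j=0}^m b_jx^j$ in $R[x]$ satisfy $p(x)q(x)\in\mathrm{nil}(R)[x]$, then $a_ib_j\in\mathrm{nil}(R)$ for all $i,j$. *)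

theory Defs
  imports "HOL-Algebra.Algebra"
begin

definition nilpotents :: "('a, 'm) ring_scheme \<Rightarrow> 'a set" where
  "nilpotents R = {x \<in> carrier R. \<exists>n::nat. x [^]\<^bsub>R\<^esub> n = \<zero>\<^bsub>R\<^esub>}"

definition nil_Armendariz :: "('a, 'm) ring_scheme \<Rightarrow> bool" where
  "nil_Armendariz R \<longleftrightarrow>
     (\<forall>p \<in> carrier (UP R). \<forall>q \<in> carrier (UP R).
        (\<forall>k. coeff (UP R) (p \<otimes>\<^bsub>UP R\<^esub> q) k \<in> nilpotents R) \<longrightarrow>
        (\<forall>i j. coeff (UP R) p i \<otimes>\<^bsub>R\<^esub> coeff (UP R) q j \<in> nilpotents R))"

definition amalgamation ::
  "('a, 'm) ring_scheme \<Rightarrow> ('b, 'n) ring_scheme \<Rightarrow> ('a \<Rightarrow> 'b) \<Rightarrow> 'b set \<Rightarrow> ('a \<times> 'b) ring" where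
  "amalgamation A B f J =
     (RDirProd A B)\<lparr>carrier := {(a, f a \<oplus>\<^bsub>B\<^esub> j) | a j. a \<in> carrier A \<and> j \<in> J}\<rparr>"

definition image_plus_ideal ::
  "('a, 'm) ring_scheme \<Rightarrow> ('b, 'n) ring_scheme \<Rightarrow> ('a \<Rightarrow> 'b) \<Rightarrow> 'b set \<Rightarrow> ('b, 'n) ring_scheme" where
  "image_plus_ideal A B f J = B\<lparr>carrier := {f a \<oplus>\<^bsub>B\<^esub> j | a j. a \<in> carrier A \<and> j \<in> J}\<rparr>"

end

theory Submission
  imports Defs
begin

lemma nil_hom:
  assumes R: "ring R" and S: "ring S" and h: "h \<in> ring_hom R S"
    and x: "x \<in> nilpotents R"
  shows "h x \<in> nilpotents S"
proof -
  interpret hr: ring_hom_ring R S h using R S h by (simp add: ring_hom_ringI2)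
  from x obtain n :: nat where xc: "x \<in> carrier R" and "x [^]\<^bsub>R\<^esub> n = \<zero>\<^bsub>R\<^esub>"
    unfolding nilpotents_def by auto
  then have "h x [^]\<^bsub>S\<^esub> n = \<zero>\<^bsub>S\<^esub>" using hr.hom_nat_pow[OF xc, of n] hr.hom_zero by simp
  then show ?thesis unfolding nilpotents_def using xc by auto
qed

lemma UP_carr: "carrier (UP R) = up R" by (simp add: UP_def)
lemma UP_co: "p \<in> carrier (UP R) \<Longrightarrow> coeff (UP R) p n = p n" by (simp add: UP_def)

lemma transfer_nA:
  assumes R: "ring R" and S: "ring S" and h: "h \<in> ring_hom R S"
    and surj: "h ` carrier R = carrier S"
    and refl: "\<And>x. x \<in> carrier R \<Longrightarrow> h x \<in> nilpotents S \<Longrightarrow> x \<in> nilpotents R"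
  shows "nil_Armendariz R \<longleftrightarrow> nil_Armendariz S"
proof -
  interpret hr: ring_hom_ring R S h using R S h by (simp add: ring_hom_ringI2)
  interpret UR: UP_ring R "UP R" using R by (simp add: UP_ring_def)
  interpret US: UP_ring S "UP S" using S by (simp add: UP_ring_def)
  note cR = UP_carr[of R] and cS = UP_carr[of S] and coR = UP_co[of _ R] and coS = UP_co[of _ S]
  have map: "\<And>p. p \<in> carrier (UP R) \<Longrightarrow> (\<lambda>n. h (p n)) \<in> carrier (UP S)"
  proof -
    fix p assume p: "p \<in> carrier (UP R)"
    then obtain m where b: "bound \<zero>\<^bsub>R\<^esub> m p" using cR R ring.bound_upD by blast
    have "bound \<zero>\<^bsub>S\<^esub> m (\<lambda>n. h (p n))" using b by (auto simp: bound_def)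
    moreover have "\<And>n. h (p n) \<in> carrier S"
      using p cR by (intro hr.hom_closed mem_upD) simp
    ultimately show "(\<lambda>n. h (p n)) \<in> carrier (UP S)" using cS by auto
  qed
  have lift: "\<And>P. P \<in> carrier (UP S) \<Longrightarrow> \<exists>p \<in> carrier (UP R). (\<lambda>n. h (p n)) = P"
  proof -
    fix P assume P: "P \<in> carrier (UP S)"
    then obtain m where b: "bound \<zero>\<^bsub>S\<^esub> m P" using cS S ring.bound_upD by blast
    define p where "p = (\<lambda>n. if P n = \<zero>\<^bsub>S\<^esub> then \<zero>\<^bsub>R\<^esub> else (SOME x. x \<in> carrier R \<and> h x = P n))"
    have ex: "\<And>n. \<exists>x. x \<in> carrier R \<and> h x = P n"
      using P cS surj by (metis imageE mem_upD)
    have pc: "\<And>n. p n \<in> carrier R \<and> h (p n) = P n"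
    proof -
      fix n show "p n \<in> carrier R \<and> h (p n) = P n"
        using someI_ex[OF ex[of n]] by (auto simp: p_def)
    qed
    have "bound \<zero>\<^bsub>R\<^esub> m p" using b by (auto simp: bound_def p_def)
    then have "p \<in> carrier (UP R)" using pc cR by auto
    moreover have "(\<lambda>n. h (p n)) = P" using pc by auto
    ultimately show "\<exists>p \<in> carrier (UP R). (\<lambda>n. h (p n)) = P" by blast
  qed
  have mulc: "\<And>p q k. p \<in> carrier (UP R) \<Longrightarrow> q \<in> carrier (UP R) \<Longrightarrow>
     coeff (UP S) ((\<lambda>n. h (p n)) \<otimes>\<^bsub>UP S\<^esub> (\<lambda>n. h (q n))) k = h (coeff (UP R) (p \<otimes>\<^bsub>UP R\<^esub> q) k)"
  proof -
    fix p q k assume p: "p \<in> carrier (UP R)" and q: "q \<in> carrier (UP R)"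
    have "h (coeff (UP R) (p \<otimes>\<^bsub>UP R\<^esub> q) k) = h (\<Oplus>\<^bsub>R\<^esub>i \<in> {..k}. p i \<otimes>\<^bsub>R\<^esub> q (k-i))"
      by (simp only: UR.coeff_mult[OF p q] coR[OF p] coR[OF q])
    also have "\<dots> = (\<Oplus>\<^bsub>S\<^esub>i \<in> {..k}. h (p i) \<otimes>\<^bsub>S\<^esub> h (q (k-i)))"
    proof -
      have pc: "\<And>i. p i \<in> carrier R" "\<And>i. q i \<in> carrier R" using p q cR mem_upD by auto
      have g: "(\<lambda>i. p i \<otimes>\<^bsub>R\<^esub> q (k-i)) \<in> {..k} \<rightarrow> carrier R"
        using pc monoid.m_closed[OF ring.is_monoid[OF R]] by auto
      have e: "h \<circ> (\<lambda>i. p i \<otimes>\<^bsub>R\<^esub> q (k-i)) = (\<lambda>i. h (p i) \<otimes>\<^bsub>S\<^esub> h (q (k-i)))"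
        using pc by (auto simp: comp_def hr.hom_mult)
      show ?thesis using hr.hom_finsum[OF g] e by simp
    qed
    also have "\<dots> = coeff (UP S) ((\<lambda>n. h (p n)) \<otimes>\<^bsub>UP S\<^esub> (\<lambda>n. h (q n))) k"
      by (simp only: US.coeff_mult[OF map[OF p] map[OF q]] coS[OF map[OF p]] coS[OF map[OF q]])
    finally show "coeff (UP S) ((\<lambda>n. h (p n)) \<otimes>\<^bsub>UP S\<^esub> (\<lambda>n. h (q n))) k = h (coeff (UP R) (p \<otimes>\<^bsub>UP R\<^esub> q) k)"
      by simp
  qed
  have nh: "\<And>x. x \<in> nilpotents R \<Longrightarrow> h x \<in> nilpotents S" using nil_hom[OF R S h] .
  show ?thesis
  proof
    assume NR: "nil_Armendariz R"
    show "nil_Armendariz S" unfolding nil_Armendariz_def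
    proof (intro ballI impI allI)
      fix P Q i j assume P: "P \<in> carrier (UP S)" and Q: "Q \<in> carrier (UP S)"
        and H: "\<forall>k. coeff (UP S) (P \<otimes>\<^bsub>UP S\<^esub> Q) k \<in> nilpotents S"
      obtain p where p: "p \<in> carrier (UP R)" and pP: "(\<lambda>n. h (p n)) = P" using lift[OF P] by blast
      obtain q where q: "q \<in> carrier (UP R)" and qQ: "(\<lambda>n. h (q n)) = Q" using lift[OF Q] by blast
      have "\<forall>k. coeff (UP R) (p \<otimes>\<^bsub>UP R\<^esub> q) k \<in> nilpotents R"
      proof
        fix k
        have "h (coeff (UP R) (p \<otimes>\<^bsub>UP R\<^esub> q) k) \<in> nilpotents S"
          using H mulc[OF p q, of k] pP qQ by metis
        moreover have "coeff (UP R) (p \<otimes>\<^bsub>UP R\<^esub> q) k \<in> carrier R"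
          using p q by simp
        ultimately show "coeff (UP R) (p \<otimes>\<^bsub>UP R\<^esub> q) k \<in> nilpotents R" using refl by blast
      qed
      then have "p i \<otimes>\<^bsub>R\<^esub> q j \<in> nilpotents R" using NR p q coR unfolding nil_Armendariz_def by metis
      then have "h (p i \<otimes>\<^bsub>R\<^esub> q j) \<in> nilpotents S" by (rule nh)
      moreover have "h (p i \<otimes>\<^bsub>R\<^esub> q j) = P i \<otimes>\<^bsub>S\<^esub> Q j"
        using hr.hom_mult[OF mem_upD[OF p[unfolded cR]] mem_upD[OF q[unfolded cR]]] pP qQ by auto
      ultimately show "coeff (UP S) P i \<otimes>\<^bsub>S\<^esub> coeff (UP S) Q j \<in> nilpotents S"
        using coS P Q by simp
    qed
  next
    assume NS: "nil_Armendariz S"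
    show "nil_Armendariz R" unfolding nil_Armendariz_def
    proof (intro ballI impI allI)
      fix p q i j assume p: "p \<in> carrier (UP R)" and q: "q \<in> carrier (UP R)"
        and H: "\<forall>k. coeff (UP R) (p \<otimes>\<^bsub>UP R\<^esub> q) k \<in> nilpotents R"
      have "\<forall>k. coeff (UP S) ((\<lambda>n. h (p n)) \<otimes>\<^bsub>UP S\<^esub> (\<lambda>n. h (q n))) k \<in> nilpotents S"
        using H mulc[OF p q] nh by simp
      then have "coeff (UP S) (\<lambda>n. h (p n)) i \<otimes>\<^bsub>S\<^esub> coeff (UP S) (\<lambda>n. h (q n)) j \<in> nilpotents S"
        using NS map[OF p] map[OF q] unfolding nil_Armendariz_def by blast
      then have "h (p i \<otimes>\<^bsub>R\<^esub> q j) \<in> nilpotents S"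
        using coS map[OF p] map[OF q] hr.hom_mult[OF mem_upD[OF p[unfolded cR]] mem_upD[OF q[unfolded cR]]] by auto
      moreover have "p i \<otimes>\<^bsub>R\<^esub> q j \<in> carrier R"
        using p q cR mem_upD monoid.m_closed[OF ring.is_monoid[OF R]] by auto
      ultimately have "p i \<otimes>\<^bsub>R\<^esub> q j \<in> nilpotents R" using refl by blast
      then show "coeff (UP R) p i \<otimes>\<^bsub>R\<^esub> coeff (UP R) q j \<in> nilpotents R" using coR p q by simp
    qed
  qed
qed


lemma RDP_simps:
  "(a, b) \<otimes>\<^bsub>RDirProd A B\<^esub> (c, d) = (a \<otimes>\<^bsub>A\<^esub> c, b \<otimes>\<^bsub>B\<^esub> d)"
  "(a, b) \<oplus>\<^bsub>RDirProd A B\<^esub> (c, d) = (a \<oplus>\<^bsub>A\<^esub> c, b \<oplus>\<^bsub>B\<^esub> d)"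
  "\<one>\<^bsub>RDirProd A B\<^esub> = (\<one>\<^bsub>A\<^esub>, \<one>\<^bsub>B\<^esub>)"
  "\<zero>\<^bsub>RDirProd A B\<^esub> = (\<zero>\<^bsub>A\<^esub>, \<zero>\<^bsub>B\<^esub>)"
  by (simp_all add: RDirProd_def DirProd_def monoid.defs)

lemma RDP_inv:
  assumes "ring A" "ring B" "a \<in> carrier A" "b \<in> carrier B"
  shows "\<ominus>\<^bsub>RDirProd A B\<^esub> (a, b) = (\<ominus>\<^bsub>A\<^esub> a, \<ominus>\<^bsub>B\<^esub> b)"
proof -
  interpret M: ring "RDirProd A B" using RDirProd_ring assms by blast
  show ?thesis
    apply (rule M.minus_equality)
    using assms by (auto simp: RDP_simps RDirProd_carrier ring.ring_simprules)
qed

lemma pow_shift: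
  assumes B: "ring B" and J: "ideal J B" and b: "b \<in> carrier B" and j: "j \<in> J"
  shows "\<exists>j'\<in>J. (b \<oplus>\<^bsub>B\<^esub> j) [^]\<^bsub>B\<^esub> (n::nat) = b [^]\<^bsub>B\<^esub> n \<oplus>\<^bsub>B\<^esub> j'"
proof (induction n)
  interpret B: ring B by fact
  interpret J: ideal J B by fact
  case 0
  show ?case using additive_subgroup.zero_closed[OF ideal.axioms(1)[OF J]] by (intro bexI[of _ "\<zero>\<^bsub>B\<^esub>"]) auto
next
  interpret B: ring B by fact
  interpret J: ideal J B by fact
  case (Suc n)
  then obtain j' where j': "j' \<in> J" and e: "(b \<oplus>\<^bsub>B\<^esub> j) [^]\<^bsub>B\<^esub> n = b [^]\<^bsub>B\<^esub> n \<oplus>\<^bsub>B\<^esub> j'" by blast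
  have jc: "j \<in> carrier B" "j' \<in> carrier B" using j j' J.Icarr by auto
  have bn: "b [^]\<^bsub>B\<^esub> n \<in> carrier B" using b by simp
  let ?w = "(b [^]\<^bsub>B\<^esub> n \<otimes>\<^bsub>B\<^esub> j \<oplus>\<^bsub>B\<^esub> j' \<otimes>\<^bsub>B\<^esub> b) \<oplus>\<^bsub>B\<^esub> j' \<otimes>\<^bsub>B\<^esub> j"
  have w: "?w \<in> J" using j j' b bn
    by (intro J.a_closed J.I_l_closed J.I_r_closed) auto
  have "(b \<oplus>\<^bsub>B\<^esub> j) [^]\<^bsub>B\<^esub> Suc n = (b [^]\<^bsub>B\<^esub> n \<oplus>\<^bsub>B\<^esub> j') \<otimes>\<^bsub>B\<^esub> (b \<oplus>\<^bsub>B\<^esub> j)"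
    using e by simp
  also have "\<dots> = b [^]\<^bsub>B\<^esub> Suc n \<oplus>\<^bsub>B\<^esub> ?w"
    using jc b bn by (simp add: B.l_distr B.r_distr B.a_ac)
  finally show ?case using w by blast
qed

theorem theorem3p1:
  fixes A :: "('a, 'm) ring_scheme" and B :: "('b, 'n) ring_scheme"
    and f :: "'a \<Rightarrow> 'b" and J :: "'b set"
  assumes "ring A" and "ring B"
    and "f \<in> ring_hom A B"
    and "ideal J B" and "J \<noteq> carrier B"
    and "{a \<in> carrier A. f a \<in> J} \<subseteq> nilpotents A"
  shows "nil_Armendariz (amalgamation A B f J) \<longleftrightarrow> nil_Armendariz (image_plus_ideal A B f J)"
proof -
  interpret A: ring A by fact
  interpret B: ring B by fact
  interpret f: ring_hom_ring A B f using assms by (simp add: ring_hom_ringI2)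
  interpret J: ideal J B by fact
  interpret M: ring "RDirProd A B" using RDirProd_ring assms by blast
  have Jc: "\<And>j. j \<in> J \<Longrightarrow> j \<in> carrier B" using J.Icarr by blast
  define H where "H = {(a, f a \<oplus>\<^bsub>B\<^esub> j) | a j. a \<in> carrier A \<and> j \<in> J}"
  define K where "K = {f a \<oplus>\<^bsub>B\<^esub> j | a j. a \<in> carrier A \<and> j \<in> J}"
  have Ram: "amalgamation A B f J = (RDirProd A B)\<lparr>carrier := H\<rparr>"
    unfolding amalgamation_def H_def by simp
  have Sim: "image_plus_ideal A B f J = B\<lparr>carrier := K\<rparr>"
    unfolding image_plus_ideal_def K_def by simp
  have subH: "subring H (RDirProd A B)"
  proof (rule M.subringI)
    show "H \<subseteq> carrier (RDirProd A B)" unfolding H_def RDirProd_carrier using Jc by auto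
    show "\<one>\<^bsub>RDirProd A B\<^esub> \<in> H" unfolding H_def RDP_simps
      using additive_subgroup.zero_closed[OF ideal.axioms(1)[OF assms(4)]] by (intro CollectI exI[of _ "\<one>\<^bsub>A\<^esub>"] exI[of _ "\<zero>\<^bsub>B\<^esub>"]) auto
  next
    fix h assume "h \<in> H"
    then obtain a j where h: "h = (a, f a \<oplus>\<^bsub>B\<^esub> j)" "a \<in> carrier A" "j \<in> J" unfolding H_def by blast
    have "\<ominus>\<^bsub>RDirProd A B\<^esub> h = (\<ominus>\<^bsub>A\<^esub> a, f (\<ominus>\<^bsub>A\<^esub> a) \<oplus>\<^bsub>B\<^esub> \<ominus>\<^bsub>B\<^esub> j)"
      using h Jc[OF h(3)] by (simp add: RDP_inv assms B.minus_add f.hom_a_inv)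
    then show "\<ominus>\<^bsub>RDirProd A B\<^esub> h \<in> H" unfolding H_def using h J.a_inv_closed by blast
  next
    fix h1 h2 assume "h1 \<in> H" "h2 \<in> H"
    then obtain a j a' j' where h: "h1 = (a, f a \<oplus>\<^bsub>B\<^esub> j)" "a \<in> carrier A" "j \<in> J"
      "h2 = (a', f a' \<oplus>\<^bsub>B\<^esub> j')" "a' \<in> carrier A" "j' \<in> J" unfolding H_def by blast
    have jc: "j \<in> carrier B" "j' \<in> carrier B" using h Jc by auto
    have fa: "f a \<in> carrier B" "f a' \<in> carrier B" using h by auto
    let ?w = "(f a \<otimes>\<^bsub>B\<^esub> j' \<oplus>\<^bsub>B\<^esub> j \<otimes>\<^bsub>B\<^esub> f a') \<oplus>\<^bsub>B\<^esub> j \<otimes>\<^bsub>B\<^esub> j'"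
    have w: "?w \<in> J" using h fa by (intro J.a_closed J.I_l_closed J.I_r_closed) auto
    have "h1 \<otimes>\<^bsub>RDirProd A B\<^esub> h2 = (a \<otimes>\<^bsub>A\<^esub> a', f (a \<otimes>\<^bsub>A\<^esub> a') \<oplus>\<^bsub>B\<^esub> ?w)"
      using h jc fa by (simp add: RDP_simps B.l_distr B.r_distr B.a_ac)
    then show "h1 \<otimes>\<^bsub>RDirProd A B\<^esub> h2 \<in> H" unfolding H_def using h w by blast
    have "h1 \<oplus>\<^bsub>RDirProd A B\<^esub> h2 = (a \<oplus>\<^bsub>A\<^esub> a', f (a \<oplus>\<^bsub>A\<^esub> a') \<oplus>\<^bsub>B\<^esub> (j \<oplus>\<^bsub>B\<^esub> j'))"
      using h jc fa by (simp add: RDP_simps B.a_ac)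
    then show "h1 \<oplus>\<^bsub>RDirProd A B\<^esub> h2 \<in> H" unfolding H_def using h J.a_closed by blast
  qed
  have subK: "subring K B"
  proof (rule B.subringI)
    show "K \<subseteq> carrier B" unfolding K_def using Jc by auto
    show "\<one>\<^bsub>B\<^esub> \<in> K" unfolding K_def
      using additive_subgroup.zero_closed[OF ideal.axioms(1)[OF assms(4)]] by (intro CollectI exI[of _ "\<one>\<^bsub>A\<^esub>"] exI[of _ "\<zero>\<^bsub>B\<^esub>"]) auto
  next
    fix h assume "h \<in> K"
    then obtain a j where h: "h = f a \<oplus>\<^bsub>B\<^esub> j" "a \<in> carrier A" "j \<in> J" unfolding K_def by blast
    have "\<ominus>\<^bsub>B\<^esub> h = f (\<ominus>\<^bsub>A\<^esub> a) \<oplus>\<^bsub>B\<^esub> \<ominus>\<^bsub>B\<^esub> j"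
      using h Jc[OF h(3)] by (simp add: B.minus_add f.hom_a_inv)
    then show "\<ominus>\<^bsub>B\<^esub> h \<in> K" unfolding K_def using h J.a_inv_closed by blast
  next
    fix h1 h2 assume "h1 \<in> K" "h2 \<in> K"
    then obtain a j a' j' where h: "h1 = f a \<oplus>\<^bsub>B\<^esub> j" "a \<in> carrier A" "j \<in> J"
      "h2 = f a' \<oplus>\<^bsub>B\<^esub> j'" "a' \<in> carrier A" "j' \<in> J" unfolding K_def by blast
    have jc: "j \<in> carrier B" "j' \<in> carrier B" using h Jc by auto
    have fa: "f a \<in> carrier B" "f a' \<in> carrier B" using h by auto
    let ?w = "(f a \<otimes>\<^bsub>B\<^esub> j' \<oplus>\<^bsub>B\<^esub> j \<otimes>\<^bsub>B\<^esub> f a') \<oplus>\<^bsub>B\<^esub> j \<otimes>\<^bsub>B\<^esub> j'"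
    have w: "?w \<in> J" using h fa by (intro J.a_closed J.I_l_closed J.I_r_closed) auto
    have "h1 \<otimes>\<^bsub>B\<^esub> h2 = f (a \<otimes>\<^bsub>A\<^esub> a') \<oplus>\<^bsub>B\<^esub> ?w"
      using h jc fa by (simp add: B.l_distr B.r_distr B.a_ac)
    then show "h1 \<otimes>\<^bsub>B\<^esub> h2 \<in> K" unfolding K_def using h w by blast
    have "h1 \<oplus>\<^bsub>B\<^esub> h2 = f (a \<oplus>\<^bsub>A\<^esub> a') \<oplus>\<^bsub>B\<^esub> (j \<oplus>\<^bsub>B\<^esub> j')"
      using h jc fa by (simp add: B.a_ac)
    then show "h1 \<oplus>\<^bsub>B\<^esub> h2 \<in> K" unfolding K_def using h J.a_closed by blast
  qed
  have ringR: "ring ((RDirProd A B)\<lparr>carrier := H\<rparr>)" using M.subring_is_ring[OF subH] .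
  have ringS: "ring (B\<lparr>carrier := K\<rparr>)" using B.subring_is_ring[OF subK] .
  have Hc: "H \<subseteq> carrier A \<times> carrier B" using subringE(1)[OF subH] by (simp add: RDirProd_carrier)
  have hom: "snd \<in> ring_hom ((RDirProd A B)\<lparr>carrier := H\<rparr>) (B\<lparr>carrier := K\<rparr>)"
  proof (rule ring_hom_memI)
    fix x assume "x \<in> carrier ((RDirProd A B)\<lparr>carrier := H\<rparr>)"
    then show "snd x \<in> carrier (B\<lparr>carrier := K\<rparr>)" unfolding H_def K_def by fastforce
  next
    fix x y assume "x \<in> carrier ((RDirProd A B)\<lparr>carrier := H\<rparr>)" "y \<in> carrier ((RDirProd A B)\<lparr>carrier := H\<rparr>)"
    then show "snd (x \<otimes>\<^bsub>(RDirProd A B)\<lparr>carrier := H\<rparr>\<^esub> y) = snd x \<otimes>\<^bsub>B\<lparr>carrier := K\<rparr>\<^esub> snd y"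
      and "snd (x \<oplus>\<^bsub>(RDirProd A B)\<lparr>carrier := H\<rparr>\<^esub> y) = snd x \<oplus>\<^bsub>B\<lparr>carrier := K\<rparr>\<^esub> snd y"
      by (cases x, cases y, simp add: RDP_simps)+
  next
    show "snd \<one>\<^bsub>(RDirProd A B)\<lparr>carrier := H\<rparr>\<^esub> = \<one>\<^bsub>B\<lparr>carrier := K\<rparr>\<^esub>" by (simp add: RDP_simps)
  qed
  have surj: "snd ` carrier ((RDirProd A B)\<lparr>carrier := H\<rparr>) = carrier (B\<lparr>carrier := K\<rparr>)"
    unfolding H_def K_def by force
  have powR: "\<And>a b k. (a, b) [^]\<^bsub>(RDirProd A B)\<lparr>carrier := H\<rparr>\<^esub> (k::nat) = (a [^]\<^bsub>A\<^esub> k, b [^]\<^bsub>B\<^esub> k)"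
  proof -
    fix a b and k :: nat
    show "(a, b) [^]\<^bsub>(RDirProd A B)\<lparr>carrier := H\<rparr>\<^esub> k = (a [^]\<^bsub>A\<^esub> k, b [^]\<^bsub>B\<^esub> k)"
      by (induction k) (simp_all add: RDP_simps)
  qed
  have refl: "\<And>x. x \<in> carrier ((RDirProd A B)\<lparr>carrier := H\<rparr>) \<Longrightarrow> snd x \<in> nilpotents (B\<lparr>carrier := K\<rparr>)
      \<Longrightarrow> x \<in> nilpotents ((RDirProd A B)\<lparr>carrier := H\<rparr>)"
  proof -
    fix x assume xH: "x \<in> carrier ((RDirProd A B)\<lparr>carrier := H\<rparr>)"
      and nx: "snd x \<in> nilpotents (B\<lparr>carrier := K\<rparr>)"
    then obtain a j where x: "x = (a, f a \<oplus>\<^bsub>B\<^esub> j)" "a \<in> carrier A" "j \<in> J" unfolding H_def by auto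
    from nx obtain n :: nat where "(f a \<oplus>\<^bsub>B\<^esub> j) [^]\<^bsub>B\<lparr>carrier := K\<rparr>\<^esub> n = \<zero>\<^bsub>B\<^esub>"
      unfolding nilpotents_def x by auto
    then have bn: "(f a \<oplus>\<^bsub>B\<^esub> j) [^]\<^bsub>B\<^esub> n = \<zero>\<^bsub>B\<^esub>" using B.nat_pow_consistent by metis
    obtain j' where j': "j' \<in> J" and e: "(f a \<oplus>\<^bsub>B\<^esub> j) [^]\<^bsub>B\<^esub> n = f a [^]\<^bsub>B\<^esub> n \<oplus>\<^bsub>B\<^esub> j'"
      using pow_shift[OF assms(2) assms(4), of "f a" j n] x by auto
    have fan: "f (a [^]\<^bsub>A\<^esub> n) = \<ominus>\<^bsub>B\<^esub> j'"
      using e bn f.hom_nat_pow[OF x(2)] x(2) Jc[OF j'] by (metis B.add.inv_equality B.nat_pow_closed f.hom_closed)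
    have "a [^]\<^bsub>A\<^esub> n \<in> nilpotents A" using assms(6) fan J.a_inv_closed[OF j'] x(2) by auto
    then obtain m :: nat where am: "(a [^]\<^bsub>A\<^esub> n) [^]\<^bsub>A\<^esub> m = \<zero>\<^bsub>A\<^esub>" unfolding nilpotents_def by auto
    have "a [^]\<^bsub>A\<^esub> (n * Suc m) = \<zero>\<^bsub>A\<^esub>"
    proof -
      have "a [^]\<^bsub>A\<^esub> (n * Suc m) = (a [^]\<^bsub>A\<^esub> n) [^]\<^bsub>A\<^esub> Suc m" using A.nat_pow_pow[OF x(2), of n "Suc m"] by simp
      also have "\<dots> = \<zero>\<^bsub>A\<^esub>" using am x(2) by simp
      finally show ?thesis .
    qed
    moreover have "(f a \<oplus>\<^bsub>B\<^esub> j) [^]\<^bsub>B\<^esub> (n * Suc m) = \<zero>\<^bsub>B\<^esub>"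
    proof -
      have c: "f a \<oplus>\<^bsub>B\<^esub> j \<in> carrier B" using x Jc by auto
      have "(f a \<oplus>\<^bsub>B\<^esub> j) [^]\<^bsub>B\<^esub> (n * Suc m) = ((f a \<oplus>\<^bsub>B\<^esub> j) [^]\<^bsub>B\<^esub> n) [^]\<^bsub>B\<^esub> Suc m"
        using B.nat_pow_pow[OF c, of n "Suc m"] by simp
      also have "\<dots> = \<zero>\<^bsub>B\<^esub>" using bn B.nat_pow_zero by simp
      finally show ?thesis .
    qed
    ultimately have "x [^]\<^bsub>(RDirProd A B)\<lparr>carrier := H\<rparr>\<^esub> (n * Suc m) = \<zero>\<^bsub>(RDirProd A B)\<lparr>carrier := H\<rparr>\<^esub>"
      using x powR by (simp add: RDP_simps)
    then show "x \<in> nilpotents ((RDirProd A B)\<lparr>carrier := H\<rparr>)" unfolding nilpotents_def using xH by blast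
  qed
  show ?thesis unfolding Ram Sim by (rule transfer_nA[OF ringR ringS hom surj refl])
qed

end
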